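(* Let $X\in\mathbf{R}^{n\times p}$ with rows $x_1,\dots,x_n\in\mathbf{R}^p$, let $P=\operatorname{conv}\{x_1,\dots,x_n\}$, and let $h_1,\dots,h_k$ be the extreme points of $P$. For each $i$ let $\omega_i=\Pr(z\in N_P(h_i))$, $z\sim\mathcal{N}(0,I_p)$. Consider the proto-algorithm: generate a $p\times m$ random matrix $G$ with independent standard normal entries, form $XG$, let $I_{\max}$ and $I_{\min}$ be the sets of row indices attaining the maximum and minimum in each column of $XG$, and return the rows of $X$ indexed by $I_{\max}\cup I_{\min}$. Let $\delta\in(0,1)$ and $$\bar{\kappa}=\frac{1}{k\log\left(\frac{1}{\max_i(1-2\omega_i)}\right)}.$$ If $m>\bar{\kappa}\,k\log\left(\frac{k}{\delta}\right)$, then with probability at least $1-\delta$ the returned rows include all $k$ extreme points of $P$.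
   Context: For a convex set $C\subset\mathbf{R}^p$ and $x\in C$, the normal cone is $N_C(x)=\{w\in\mathbf{R}^p : w^T(y-x)\le 0\text{ for all }y\in C\}$. The solid angle of a cone $K\subset\mathbf{R}^p$ is $\Pr(z\in K)$ for $z\sim\mathcal{N}(0,I_p)$. *)

theory Defs
  imports "HOL-Analysis.Analysis" "HOL-Probability.Probability"
begin

definition normal_cone :: "('a::euclidean_space) set \<Rightarrow> 'a \<Rightarrow> 'a set" where
  "normal_cone C x = {w. \<forall>y\<in>C. inner w (y - x) \<le> 0}"

definition std_normal_measure :: "real measure" where
  "std_normal_measure = density lborel std_normal_density"

definition std_gaussian :: "(real ^ 'p::finite) measure" where
  "std_gaussian = distr (PiM UNIV (\<lambda>_::'p. std_normal_measure)) borel (\<lambda>z. \<chi> i. z i)"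

definition solid_angle :: "(real ^ 'p::finite) set \<Rightarrow> real" where
  "solid_angle K = measure std_gaussian K"

text \<open>Law of a p x m random matrix G with independent standard normal entries;
  G is represented as the function (i,j) \<mapsto> G_ij, i::'p, j < m.\<close>
definition gaussian_matrix :: "nat \<Rightarrow> (('p::finite \<times> nat) \<Rightarrow> real) measure" where
  "gaussian_matrix m = PiM (UNIV \<times> {..<m}) (\<lambda>_. std_normal_measure)"

definition gcol :: "(('p::finite \<times> nat) \<Rightarrow> real) \<Rightarrow> nat \<Rightarrow> real ^ 'p" where
  "gcol G j = (\<chi> i. G (i, j))"

text \<open>Entry (r,j) of XG, where the rows of X are x 0, ..., x (n-1).\<close>
definition XG_entry :: "(nat \<Rightarrow> real ^ 'p::finite) \<Rightarrow> (('p \<times> nat) \<Rightarrow> real) \<Rightarrow> nat \<Rightarrow> nat \<Rightarrow> real" where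
  "XG_entry x G r j = inner (x r) (gcol G j)"

definition I_max :: "nat \<Rightarrow> nat \<Rightarrow> (nat \<Rightarrow> real ^ 'p::finite) \<Rightarrow> (('p \<times> nat) \<Rightarrow> real) \<Rightarrow> nat set" where
  "I_max n m x G = {r. r < n \<and> (\<exists>j<m. \<forall>s<n. XG_entry x G s j \<le> XG_entry x G r j)}"

definition I_min :: "nat \<Rightarrow> nat \<Rightarrow> (nat \<Rightarrow> real ^ 'p::finite) \<Rightarrow> (('p \<times> nat) \<Rightarrow> real) \<Rightarrow> nat set" where
  "I_min n m x G = {r. r < n \<and> (\<exists>j<m. \<forall>s<n. XG_entry x G r j \<le> XG_entry x G s j)}"

definition returned_rows :: "nat \<Rightarrow> nat \<Rightarrow> (nat \<Rightarrow> real ^ 'p::finite) \<Rightarrow> (('p \<times> nat) \<Rightarrow> real) \<Rightarrow> (real ^ 'p) set" where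
  "returned_rows n m x G = x ` (I_max n m x G \<union> I_min n m x G)"

end

theory Submission
  imports Defs
begin

lemma prob_N: "prob_space std_normal_measure"
  unfolding std_normal_measure_def by (rule prob_space_normal_density) simp

lemma sets_N[measurable_cong]: "sets std_normal_measure = sets borel"
  unfolding std_normal_measure_def by simp

lemma space_N[simp]: "space std_normal_measure = UNIV"
  unfolding std_normal_measure_def by simp

lemma meas_vec[measurable]:
  "(\<lambda>z. \<chi> i. z i) \<in> measurable (PiM (UNIV::'p::finite set) (\<lambda>_. std_normal_measure)) (borel :: (real^'p) measure)"
proof -
  have "(\<lambda>z::'p\<Rightarrow>real. (\<chi> i. z i) \<bullet> b) \<in> borel_measurable (PiM UNIV (\<lambda>_. std_normal_measure))" if "b \<in> Basis" for b
  proof -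
    from that obtain j where b: "b = axis j 1" by (simp add: Basis_vec_def) blast
    have "(\<lambda>z::'p\<Rightarrow>real. (\<chi> i. z i) \<bullet> b) = (\<lambda>z. z j)"
      by (simp add: b inner_axis)
    moreover have "(\<lambda>z. z j) \<in> borel_measurable (PiM (UNIV::'p set) (\<lambda>_. std_normal_measure))"
      by measurable
    ultimately show ?thesis by simp
  qed
  then show ?thesis by (subst borel_measurable_euclidean_space) blast
qed

lemma std_normal_density_uminus: "std_normal_density (- x) = std_normal_density x"
  by (simp add: normal_density_def)

lemma symm_N: "distr std_normal_measure std_normal_measure uminus = std_normal_measure"
proof (rule measure_eqI)
  fix A assume A: "A \<in> sets (distr std_normal_measure std_normal_measure uminus)"
  then have A': "A \<in> sets borel" by (simp add: sets_N)
  have mA: "uminus -` A \<in> sets borel"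
    by (rule measurable_sets_borel[OF _ A']) measurable
  have mf: "(\<lambda>x. indicator A x * ennreal (std_normal_density x)) \<in> borel_measurable borel"
    using A' by measurable
  have "emeasure (distr std_normal_measure std_normal_measure uminus) A
      = emeasure std_normal_measure (uminus -` A)"
    using A' by (subst emeasure_distr) (auto simp: sets_N)
  also have "\<dots> = (\<integral>\<^sup>+ x. ennreal (std_normal_density x) * indicator (uminus -` A) x \<partial>lborel)"
    unfolding std_normal_measure_def using mA
    by (subst emeasure_density) auto
  also have "\<dots> = (\<integral>\<^sup>+ x. indicator A x * ennreal (std_normal_density x) \<partial>lborel)"
  proof -
    have "(\<integral>\<^sup>+ x. indicator A x * ennreal (std_normal_density x) \<partial>lborel)
      = ennreal \<bar>-1\<bar> * (\<integral>\<^sup>+ x. indicator A (0 + -1 * x) * ennreal (std_normal_density (0 + -1 * x)) \<partial>lborel)"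
      by (rule nn_integral_real_affine[OF mf]) simp
    also have "\<dots> = (\<integral>\<^sup>+ x. indicator A (0 + -1 * x) * ennreal (std_normal_density (0 + -1 * x)) \<partial>lborel)"
      by simp
    also have "\<dots> = (\<integral>\<^sup>+ x. ennreal (std_normal_density x) * indicator (uminus -` A) x \<partial>lborel)"
      by (intro nn_integral_cong) (simp add: std_normal_density_uminus indicator_def)
    finally show ?thesis by simp
  qed
  also have "\<dots> = emeasure std_normal_measure A"
    unfolding std_normal_measure_def using A'
    by (subst emeasure_density) (auto simp: mult.commute)
  finally show "emeasure (distr std_normal_measure std_normal_measure uminus) A = emeasure std_normal_measure A" .
qed simp

lemma N_singleton: "emeasure std_normal_measure {c} = 0"
  unfolding std_normal_measure_def
  apply (subst emeasure_density)
    apply simp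
   apply simp
  apply (rule nn_integral_null_set)
  apply (rule finite_imp_null_set_lborel)
  apply simp
  done


abbreviation GammaM :: "('p::finite \<Rightarrow> real) measure" where
  "GammaM \<equiv> PiM UNIV (\<lambda>_. std_normal_measure)"

lemma prob_G: "prob_space (GammaM :: ('p::finite \<Rightarrow> real) measure)"
  by (rule prob_space_PiM) (rule prob_N)

lemma space_G[simp]: "space (GammaM :: ('p::finite \<Rightarrow> real) measure) = UNIV"
  by (simp add: space_PiM)

lemma sets_gauss[measurable_cong]: "sets (std_gaussian :: (real^'p::finite) measure) = sets borel"
  by (simp add: std_gaussian_def)

lemma space_gauss[simp]: "space (std_gaussian :: (real^'p::finite) measure) = UNIV"
  by (simp add: std_gaussian_def)

lemma prob_gauss: "prob_space (std_gaussian :: (real^'p::finite) measure)"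
  unfolding std_gaussian_def by (rule prob_space.prob_space_distr[OF prob_G meas_vec])

lemma negc_meas[measurable]: "(\<lambda>z. \<lambda>i\<in>UNIV. - z i) \<in> measurable (GammaM :: ('p::finite \<Rightarrow> real) measure) GammaM"
  by measurable

lemma symm_G: "distr GammaM GammaM (\<lambda>z. \<lambda>i\<in>UNIV. - z i) = (GammaM :: ('p::finite \<Rightarrow> real) measure)"
proof -
  have "distr GammaM GammaM (compose UNIV uminus) = PiM (UNIV::'p set) (\<lambda>i. distr std_normal_measure std_normal_measure uminus)"
    by (rule distr_PiM_finite_prob_space') (auto simp: prob_N)
  also have "\<dots> = GammaM" by (simp add: symm_N)
  moreover have "compose UNIV uminus = (\<lambda>z::'p\<Rightarrow>real. \<lambda>i\<in>UNIV. - z i)"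
    by (rule ext) (simp add: compose_def)
  ultimately show ?thesis by simp
qed

lemma gauss_symm: "distr std_gaussian borel uminus = (std_gaussian :: (real^'p::finite) measure)"
proof -
  have "distr std_gaussian borel uminus = distr (GammaM :: ('p \<Rightarrow> real) measure) borel (uminus \<circ> (\<lambda>z. \<chi> i. z i))"
    unfolding std_gaussian_def by (rule distr_distr) measurable
  also have "\<dots> = distr GammaM borel ((\<lambda>z. \<chi> i. z i) \<circ> (\<lambda>z. \<lambda>i\<in>UNIV. - z i))"
    by (rule distr_cong) (auto simp: vec_eq_iff)
  also have "\<dots> = distr (distr GammaM GammaM (\<lambda>z. \<lambda>i\<in>UNIV. - z i)) borel (\<lambda>z. \<chi> i. z i)"
    by (rule distr_distr[symmetric]) measurable
  also have "\<dots> = std_gaussian"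
    by (simp add: symm_G std_gaussian_def)
  finally show ?thesis .
qed

lemma gauss_neg_set:
  assumes "A \<in> sets borel"
  shows "measure std_gaussian (uminus ` A) = measure (std_gaussian :: (real^'p::finite) measure) A"
proof -
  have "uminus ` A = uminus -` A \<inter> space std_gaussian"
    by (force simp: image_iff)
  then have "measure std_gaussian (uminus ` A) = measure (distr std_gaussian borel uminus) A"
    using assms by (simp add: measure_distr sets_gauss)
  then show ?thesis by (simp add: gauss_symm)
qed


lemma sum_upd_split:
  fixes v :: "real^'p::finite"
  shows "(\<Sum>i\<in>UNIV. (y(i0 := x)) i * v $ i) = x * v $ i0 + (\<Sum>i\<in>UNIV - {i0}. y i * v $ i)"
proof -
  have "(\<Sum>i\<in>UNIV. (y(i0 := x)) i * v $ i) = (y(i0 := x)) i0 * v $ i0 + (\<Sum>i\<in>UNIV - {i0}. (y(i0 := x)) i * v $ i)"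
    by (rule sum.remove) auto
  also have "(\<Sum>i\<in>UNIV - {i0}. (y(i0 := x)) i * v $ i) = (\<Sum>i\<in>UNIV - {i0}. y i * v $ i)"
    by (rule sum.cong) auto
  finally show ?thesis by simp
qed

lemma gauss_hyper:
  fixes v :: "real^'p::finite"
  assumes "v \<noteq> 0"
  shows "emeasure std_gaussian {w. w \<bullet> v = 0} = 0"
proof -
  obtain i0 where i0: "v $ i0 \<noteq> 0" using assms by (auto simp: vec_eq_iff)
  define S where "S = {z::'p\<Rightarrow>real. (\<Sum>i\<in>UNIV. z i * v $ i) = 0}"
  have S: "S \<in> sets (GammaM :: ('p \<Rightarrow> real) measure)"
  proof -
    have "S = {z \<in> space (GammaM :: ('p \<Rightarrow> real) measure). (\<Sum>i\<in>UNIV. z i * v $ i) = 0}"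
      by (simp add: S_def)
    also have "\<dots> \<in> sets GammaM" by measurable
    finally show ?thesis .
  qed
  have "emeasure std_gaussian {w. w \<bullet> v = 0} = emeasure (GammaM :: ('p \<Rightarrow> real) measure) ((\<lambda>z. \<chi> i. z i) -` {w. w \<bullet> v = 0} \<inter> space GammaM)"
    unfolding std_gaussian_def by (rule emeasure_distr) (auto)
  also have "(\<lambda>z. \<chi> i. z i) -` {w. w \<bullet> v = 0} \<inter> space GammaM = S"
    by (auto simp: S_def inner_vec_def)
  finally have e1: "emeasure std_gaussian {w. w \<bullet> v = 0} = emeasure GammaM S" .
  define J where "J = UNIV - {i0}"
  have ins: "insert i0 J = UNIV" by (auto simp: J_def)
  let ?G' = "PiM J (\<lambda>_. std_normal_measure)"
  let ?f = "\<lambda>(x, X). X(i0 := x)"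
  have eq: "distr (std_normal_measure \<Otimes>\<^sub>M ?G') (PiM (insert i0 J) (\<lambda>_. std_normal_measure)) ?f
      = PiM (insert i0 J) (\<lambda>_. std_normal_measure)"
    by (rule distr_pair_PiM_eq_PiM) (auto simp: prob_N)
  have fm: "?f \<in> measurable (std_normal_measure \<Otimes>\<^sub>M ?G') (PiM (insert i0 J) (\<lambda>_. std_normal_measure))"
    by measurable
  interpret N1: prob_space std_normal_measure by (rule prob_N)
  interpret G1: prob_space ?G' by (rule prob_space_PiM) (rule prob_N)
  interpret P: pair_prob_space std_normal_measure ?G' ..
  define A where "A = ?f -` S \<inter> space (std_normal_measure \<Otimes>\<^sub>M ?G')"
  have A: "A \<in> sets (std_normal_measure \<Otimes>\<^sub>M ?G')"
    unfolding A_def using S ins by (intro measurable_sets[OF fm]) simp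
  have "emeasure GammaM S = emeasure (distr (std_normal_measure \<Otimes>\<^sub>M ?G') (PiM (insert i0 J) (\<lambda>_. std_normal_measure)) ?f) S"
    using eq by (simp add: ins)
  also have "\<dots> = emeasure (std_normal_measure \<Otimes>\<^sub>M ?G') A"
    unfolding A_def using S ins by (intro emeasure_distr fm) simp
  also have "\<dots> = (\<integral>\<^sup>+y. emeasure std_normal_measure ((\<lambda>x. (x, y)) -` A) \<partial>?G')"
    by (rule P.emeasure_pair_measure_alt2[OF A])
  also have "\<dots> = (\<integral>\<^sup>+y. 0 \<partial>?G')"
  proof (rule nn_integral_cong)
    fix y assume "y \<in> space ?G'"
    define c where "c = - (\<Sum>i\<in>J. y i * v $ i) / v $ i0"
    have "(\<lambda>x. (x, y)) -` A \<subseteq> {c}"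
    proof
      fix x assume "x \<in> (\<lambda>x. (x, y)) -` A"
      then have "(\<Sum>i\<in>UNIV. (y(i0 := x)) i * v $ i) = 0"
        by (simp add: A_def S_def)
      then have "x * v $ i0 + (\<Sum>i\<in>J. y i * v $ i) = 0"
        by (simp only: sum_upd_split J_def)
      then show "x \<in> {c}" using i0 by (simp add: c_def field_simps)
    qed
    then have "emeasure std_normal_measure ((\<lambda>x. (x, y)) -` A) \<le> emeasure std_normal_measure {c}"
      by (intro emeasure_mono) (simp_all add: sets_N)
    then show "emeasure std_normal_measure ((\<lambda>x. (x, y)) -` A) = 0"
      by (simp add: N_singleton)
  qed
  also have "\<dots> = 0" by simp
  finally show ?thesis using e1 by simp
qed


lemma N_interval_pos:
  assumes "a < b"
  shows "emeasure std_normal_measure {a<..<b} > 0"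
proof (rule ccontr)
  assume "\<not> ?thesis"
  then have z: "emeasure std_normal_measure {a<..<b} = 0" by simp
  have "emeasure std_normal_measure {a<..<b} = (\<integral>\<^sup>+ x. ennreal (std_normal_density x) * indicator {a<..<b} x \<partial>lborel)"
    unfolding std_normal_measure_def by (subst emeasure_density) auto
  with z have "AE x in lborel. ennreal (std_normal_density x) * indicator {a<..<b} x = 0"
    by (subst nn_integral_0_iff_AE[symmetric]) auto
  then have "AE x in lborel. x \<notin> {a<..<b}"
    by eventually_elim (auto simp: indicator_def normal_density_def)
  then have "emeasure lborel {a<..<b} = 0"
    by (subst (asm) AE_iff_measurable[where N="{a<..<b}"]) auto
  with assms show False by simp
qed

lemma gauss_ball_pos:
  fixes c :: "real^'p::finite"
  assumes r: "r > 0"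
  shows "emeasure std_gaussian (ball c r) > 0"
proof -
  define e where "e = r / real CARD('p)"
  have e: "e > 0" using r by (simp add: e_def)
  define B where "B = PiE (UNIV::'p set) (\<lambda>i. {c$i - e<..<c$i + e})"
  have "emeasure std_gaussian (ball c r) = emeasure (GammaM :: ('p \<Rightarrow> real) measure) ((\<lambda>z. \<chi> i. z i) -` ball c r \<inter> space GammaM)"
    unfolding std_gaussian_def by (rule emeasure_distr) auto
  also have "\<dots> \<ge> emeasure GammaM B"
  proof (rule emeasure_mono)
    show "B \<subseteq> (\<lambda>z. \<chi> i. z i) -` ball c r \<inter> space GammaM"
    proof
      fix z assume z: "z \<in> B"
      have "dist c (\<chi> i. z i) = norm (c - (\<chi> i. z i))" by (simp add: dist_norm)
      also have "\<dots> \<le> (\<Sum>i\<in>UNIV. \<bar>(c - (\<chi> i. z i)) $ i\<bar>)" by (rule norm_le_l1_cart)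
      also have "\<dots> < (\<Sum>i\<in>(UNIV::'p set). e)"
      proof (rule sum_strict_mono)
        fix i :: 'p
        have "c$i - e < z i \<and> z i < c$i + e" using z by (auto simp: B_def PiE_iff)
        then show "\<bar>(c - (\<chi> i. z i)) $ i\<bar> < e" by (simp add: abs_less_iff)
      qed auto
      also have "\<dots> = r" using r by (simp add: e_def)
      finally show "z \<in> (\<lambda>z. \<chi> i. z i) -` ball c r \<inter> space GammaM" by simp
    qed
    show "(\<lambda>z. \<chi> i. z i) -` ball c r \<inter> space GammaM \<in> sets (GammaM :: ('p \<Rightarrow> real) measure)"
      by (rule measurable_sets[OF meas_vec]) simp
  qed
  finally have ge: "emeasure GammaM B \<le> emeasure std_gaussian (ball c r)" .
  have "emeasure (GammaM :: ('p \<Rightarrow> real) measure) B = (\<Prod>i\<in>UNIV. emeasure std_normal_measure {c$i - e<..<c$i + e})"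
  proof -
    interpret PS: product_prob_space "\<lambda>_::'p. std_normal_measure"
      by (rule product_prob_spaceI) (rule prob_N)
    show ?thesis unfolding B_def by (rule PS.emeasure_PiM) (auto simp: sets_N)
  qed
  also have "\<dots> > 0"
  proof -
    have "emeasure std_normal_measure {c$i - e<..<c$i + e} \<noteq> 0" for i
      using N_interval_pos[of "c$i - e" "c$i + e"] e by simp
    then show ?thesis by (simp add: zero_less_iff_neq_zero prod_zero_iff)
  qed
  finally show ?thesis using ge by order
qed


lemma meas_vec_gen:
  assumes "\<And>i. f i \<in> I"
  shows "(\<lambda>\<omega>. \<chi> i::'p::finite. \<omega> (f i)) \<in> measurable (PiM I (\<lambda>_. std_normal_measure)) (borel :: (real^'p) measure)"
proof -
  have "(\<lambda>\<omega>. (\<chi> i::'p. \<omega> (f i)) \<bullet> b) \<in> borel_measurable (PiM I (\<lambda>_. std_normal_measure))" if "b \<in> Basis" for b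
  proof -
    from that obtain j where b: "b = axis j 1" by (simp add: Basis_vec_def) blast
    have "(\<lambda>\<omega>. (\<chi> i::'p. \<omega> (f i)) \<bullet> b) = (\<lambda>\<omega>. \<omega> (f j))"
      by (simp add: b inner_axis)
    moreover have "(\<lambda>\<omega>. \<omega> (f j)) \<in> borel_measurable (PiM I (\<lambda>_. std_normal_measure))"
      using assms[of j] by measurable
    ultimately show ?thesis by simp
  qed
  then show ?thesis by (subst borel_measurable_euclidean_space) blast
qed

lemma prob_M: "prob_space (gaussian_matrix m :: (('p::finite \<times> nat) \<Rightarrow> real) measure)"
  unfolding gaussian_matrix_def by (rule prob_space_PiM) (rule prob_N)

lemma gcol_meas[measurable]:
  assumes "j < m"
  shows "(\<lambda>G. gcol G j) \<in> measurable (gaussian_matrix m :: (('p::finite \<times> nat) \<Rightarrow> real) measure) borel"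
  unfolding gaussian_matrix_def gcol_def by (rule meas_vec_gen) (use assms in auto)

lemma gcol_distr:
  assumes "j < m"
  shows "distr (gaussian_matrix m) borel (\<lambda>G. gcol G j) = (std_gaussian :: (real^'p::finite) measure)"
proof -
  let ?r = "\<lambda>\<omega>::('p \<times> nat) \<Rightarrow> real. \<lambda>n\<in>UNIV. \<omega> (n, j)"
  have re: "distr (PiM (UNIV \<times> {..<m}) (\<lambda>_. std_normal_measure)) (PiM UNIV (\<lambda>i::'p. std_normal_measure)) ?r
      = PiM UNIV (\<lambda>i::'p. std_normal_measure)"
    using distr_PiM_reindex[of "UNIV \<times> {..<m}" "\<lambda>_. std_normal_measure" "\<lambda>i::'p. (i, j)" UNIV] assms
    by (auto simp: prob_N inj_on_def)
  have rm: "?r \<in> measurable (PiM (UNIV \<times> {..<m}) (\<lambda>_. std_normal_measure)) (PiM UNIV (\<lambda>i::'p. std_normal_measure))"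
    using assms by (intro measurable_restrict measurable_component_singleton) auto
  have "distr (gaussian_matrix m) borel (\<lambda>G. gcol G j) = distr (PiM (UNIV \<times> {..<m}) (\<lambda>_. std_normal_measure)) borel ((\<lambda>z. \<chi> i. z i) \<circ> ?r)"
    unfolding gaussian_matrix_def gcol_def by (rule distr_cong) (auto simp: vec_eq_iff)
  also have "\<dots> = distr (distr (PiM (UNIV \<times> {..<m}) (\<lambda>_. std_normal_measure)) (PiM UNIV (\<lambda>i::'p. std_normal_measure)) ?r) borel (\<lambda>z. \<chi> i. z i)"
    by (rule distr_distr[symmetric]) (use rm in auto)
  also have "\<dots> = std_gaussian" by (simp add: re std_gaussian_def)
  finally show ?thesis .
qed


lemma coords_indep:
  assumes "m > 0"
  shows "prob_space.indep_vars (gaussian_matrix m) (\<lambda>_. std_normal_measure) (\<lambda>ij G. G ij) (UNIV \<times> {..<m} :: ('p::finite \<times> nat) set)"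
proof -
  let ?I = "UNIV \<times> {..<m} :: ('p \<times> nat) set"
  let ?M = "gaussian_matrix m :: (('p \<times> nat) \<Rightarrow> real) measure"
  interpret prob_space ?M by (rule prob_M)
  have ne: "?I \<noteq> {}" using assms by auto
  have rv: "random_variable std_normal_measure (\<lambda>G. G ij)" if "ij \<in> ?I" for ij
    unfolding gaussian_matrix_def using that by (rule measurable_component_singleton)
  have "distr ?M (PiM ?I (\<lambda>_. std_normal_measure)) (\<lambda>x. \<lambda>i\<in>?I. x i) = distr ?M ?M (\<lambda>x. x)"
    unfolding gaussian_matrix_def
    by (rule distr_cong) (auto simp: space_PiM PiE_def extensional_restrict)
  also have "\<dots> = ?M" by (rule distr_id)
  also have "\<dots> = PiM ?I (\<lambda>i. distr ?M std_normal_measure (\<lambda>x. x i))"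
    unfolding gaussian_matrix_def
    by (rule PiM_cong) (auto intro!: distr_PiM_component[OF prob_N, symmetric])
  finally show ?thesis
    by (subst indep_vars_iff_distr_eq_PiM'[OF ne rv]) auto
qed

lemma cols_indep:
  assumes "m > 0"
  shows "prob_space.indep_vars (gaussian_matrix m :: (('p::finite \<times> nat) \<Rightarrow> real) measure) (\<lambda>_. borel) (\<lambda>j G. gcol G j :: real^'p) {..<m}"
proof -
  let ?I = "UNIV \<times> {..<m} :: ('p \<times> nat) set"
  let ?M = "gaussian_matrix m :: (('p \<times> nat) \<Rightarrow> real) measure"
  interpret prob_space ?M by (rule prob_M)
  let ?K = "\<lambda>j::nat. (UNIV \<times> {j} :: ('p \<times> nat) set)"
  have dj: "disjoint_family_on ?K {..<m}"
    unfolding disjoint_family_on_def by blast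
  have sub: "\<And>j. j \<in> {..<m} \<Longrightarrow> ?K j \<subseteq> ?I" by blast
  have r: "indep_vars (\<lambda>j. PiM (?K j) (\<lambda>_. std_normal_measure)) (\<lambda>j \<omega>. restrict (\<lambda>i. \<omega> i) (?K j)) {..<m}"
    by (rule indep_vars_restrict[OF coords_indep[OF assms] sub dj])
  have mv: "(\<lambda>\<omega>'. \<chi> i::'p. \<omega>' (i, j)) \<in> measurable (PiM (?K j) (\<lambda>_. std_normal_measure)) borel" for j
    by (rule meas_vec_gen) blast
  have c: "indep_vars (\<lambda>_. borel) (\<lambda>j \<omega>. (\<lambda>\<omega>'. \<chi> i::'p. \<omega>' (i, j)) (restrict (\<lambda>i. \<omega> i) (?K j))) {..<m}"
    by (rule indep_vars_compose2[OF r mv])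
  have eqX: "(\<lambda>\<omega>. (\<lambda>\<omega>'. \<chi> i::'p. \<omega>' (i, j)) (restrict (\<lambda>i. \<omega> i) (?K j))) = (\<lambda>G. gcol G j)" for j
    by (rule ext) (simp add: gcol_def)
  show ?thesis
    using c by (simp only: eqX)
qed

lemma all_cols_prob:
  assumes "m > 0" and A: "A \<in> sets borel"
  shows "measure (gaussian_matrix m) {G \<in> space (gaussian_matrix m). \<forall>j<m. gcol G j \<in> A}
    = measure (std_gaussian :: (real^'p::finite) measure) A ^ m"
proof -
  let ?M = "gaussian_matrix m :: (('p \<times> nat) \<Rightarrow> real) measure"
  interpret prob_space ?M by (rule prob_M)
  have ind: "indep_vars (\<lambda>_. borel) (\<lambda>j G. gcol G j) {..<m}"
    by (rule cols_indep[OF assms(1)])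
  have "{G \<in> space ?M. \<forall>j<m. gcol G j \<in> A} = (\<Inter>j\<in>{..<m}. (\<lambda>G. gcol G j) -` A \<inter> space ?M)"
    using assms(1) by auto
  also have "prob \<dots> = (\<Prod>j\<in>{..<m}. prob ((\<lambda>G. gcol G j) -` A \<inter> space ?M))"
    by (rule indep_varsD_finite[OF ind]) (use assms in auto)
  also have "\<dots> = (\<Prod>j\<in>{..<m}. measure (std_gaussian :: (real^'p) measure) A)"
  proof (rule prod.cong)
    fix j assume "j \<in> {..<m}"
    then have j: "j < m" by simp
    have "prob ((\<lambda>G. gcol G j) -` A \<inter> space ?M) = measure (distr ?M borel (\<lambda>G. gcol G j)) A"
      using A j by (subst measure_distr) auto
    then show "prob ((\<lambda>G. gcol G j) -` A \<inter> space ?M) = measure (std_gaussian :: (real^'p) measure) A"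
      by (simp add: gcol_distr[OF j])
  qed simp
  finally show ?thesis by simp
qed


lemma gauss_neg_pre:
  assumes "A \<in> sets borel"
  shows "measure std_gaussian (uminus -` A) = measure (std_gaussian :: (real^'p::finite) measure) A"
proof -
  have "measure std_gaussian (uminus -` A) = measure std_gaussian (uminus -` A \<inter> space std_gaussian)"
    by simp
  also have "\<dots> = measure (distr std_gaussian borel uminus) A"
    using assms by (subst measure_distr) (auto simp: sets_gauss)
  finally show ?thesis by (simp add: gauss_symm)
qed

lemma normal_cone_closed: "closed (normal_cone C (h::'a::euclidean_space))"
proof -
  have "normal_cone C h = (\<Inter>y\<in>C. {w. inner (y - h) w \<le> 0})"
    by (auto simp: normal_cone_def inner_commute)
  moreover have "closed (\<Inter>y\<in>C. {w. inner (y - h) w \<le> 0})"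
    by (intro closed_INT ballI closed_halfspace_le)
  ultimately show ?thesis by simp
qed

lemma normal_cone_hull:
  assumes "\<forall>y\<in>S. inner w (y - h) \<le> 0"
  shows "w \<in> normal_cone (convex hull S) (h::'a::euclidean_space)"
proof -
  have cv: "convex {y. inner w (y - h) \<le> 0}"
  proof -
    have "{y. inner w (y - h) \<le> 0} = {y. inner w y \<le> inner w h}"
      by (auto simp: inner_diff_right)
    then show ?thesis by (simp add: convex_halfspace_le)
  qed
  have "convex hull S \<subseteq> {y. inner w (y - h) \<le> 0}"
    by (rule hull_minimal) (use assms cv in auto)
  then show ?thesis by (auto simp: normal_cone_def)
qed

lemma geo_exposed:
  fixes S :: "(real^'p::finite) set"
  assumes fin: "finite S" and ext: "h extreme_point_of (convex hull S)"
  shows "\<exists>c r. r > 0 \<and> ball c r \<subseteq> normal_cone (convex hull S) h"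
proof -
  let ?P = "convex hull S"
  let ?T = "convex hull (S - {h})"
  have hP: "h \<in> ?P" and cvx: "convex (?P - {h})"
    using ext extreme_point_of_stillconvex[of ?P h] by auto
  have "?T \<subseteq> ?P - {h}"
    by (rule hull_minimal) (use cvx hull_subset[of S convex] in auto)
  then have hT: "h \<notin> ?T" by auto
  have clT: "closed ?T"
    using fin by (intro compact_imp_closed finite_imp_compact_convex_hull) simp
  obtain a b where ab: "inner a h < b" "\<forall>y\<in>?T. b < inner a y"
    using separating_hyperplane_closed_point[OF convex_convex_hull clT hT] by blast
  define U where "U = (\<Inter>y\<in>S - {h}. {w. inner (y - h) w < 0})"
  have oU: "open U" unfolding U_def
    using fin by (intro open_INT ballI open_halfspace_lt) simp_all
  have cU: "-a \<in> U"
  proof -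
    have "inner (y - h) (-a) < 0" if "y \<in> S - {h}" for y
    proof -
      have "y \<in> ?T" using that hull_subset[of "S - {h}" convex] by blast
      then have "b < inner a y" using ab by blast
      moreover have "inner (y - h) (-a) = inner a h - inner a y"
        by (simp add: inner_diff_left inner_commute[of y a] inner_commute[of h a])
      ultimately show ?thesis using ab(1) by linarith
    qed
    then show ?thesis by (simp add: U_def)
  qed
  obtain r where r: "r > 0" "ball (-a) r \<subseteq> U"
    using oU cU open_contains_ball by blast
  have "U \<subseteq> normal_cone ?P h"
  proof
    fix w assume "w \<in> U"
    then have "\<forall>y\<in>S. inner w (y - h) \<le> 0"
      by (auto simp: U_def inner_commute intro: less_imp_le)
    then show "w \<in> normal_cone ?P h" by (rule normal_cone_hull)
  qed
  then show ?thesis using r by blast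
qed

lemma inner_gcol: "inner (gcol G j) (x s) = XG_entry x G s j"
  by (simp add: XG_entry_def inner_commute)

lemma returned_max:
  assumes r: "r < n" and j: "j < m"
    and nc: "gcol G j \<in> normal_cone (convex hull (x ` {..<n})) (x r)"
  shows "x r \<in> returned_rows n m x G"
proof -
  have "XG_entry x G s j \<le> XG_entry x G r j" if "s < n" for s
  proof -
    have "x s \<in> convex hull (x ` {..<n})" by (rule hull_inc) (simp add: that)
    then have "inner (gcol G j) (x s - x r) \<le> 0" using nc unfolding normal_cone_def by blast
    then show ?thesis by (simp add: inner_diff_right inner_gcol)
  qed
  then have "r \<in> I_max n m x G" using r j unfolding I_max_def by blast
  then show ?thesis unfolding returned_rows_def by (intro imageI UnI1)
qed

lemma returned_min:
  assumes r: "r < n" and j: "j < m"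
    and nc: "- gcol G j \<in> normal_cone (convex hull (x ` {..<n})) (x r)"
  shows "x r \<in> returned_rows n m x G"
proof -
  have "XG_entry x G r j \<le> XG_entry x G s j" if "s < n" for s
  proof -
    have "x s \<in> convex hull (x ` {..<n})" by (rule hull_inc) (simp add: that)
    then have "inner (- gcol G j) (x s - x r) \<le> 0" using nc unfolding normal_cone_def by blast
    then show ?thesis by (simp add: inner_diff_right inner_gcol)
  qed
  then have "r \<in> I_min n m x G" using r j unfolding I_min_def by blast
  then show ?thesis unfolding returned_rows_def by (intro imageI UnI2)
qed


theorem corollary1:
  fixes x :: "nat \<Rightarrow> real ^ 'p::finite" and n m :: nat and \<delta> :: real
  defines "P \<equiv> convex hull (x ` {..<n})"
  defines "H \<equiv> {h. h extreme_point_of P}"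
  defines "k \<equiv> card H"
  defines "\<mu> \<equiv> Max ((\<lambda>h. 1 - 2 * solid_angle (normal_cone P h)) ` H)"
  defines "\<kappa> \<equiv> 1 / (real k * ln (1 / \<mu>))"
  assumes "n \<ge> 1"
    and "0 < \<delta>" and "\<delta> < 1"
    and "0 < \<mu>"
    and "real m > \<kappa> * real k * ln (real k / \<delta>)"
  shows "measure (gaussian_matrix m) {G \<in> space (gaussian_matrix m). H \<subseteq> returned_rows n m x G}
           \<ge> 1 - \<delta>"
proof -
  note n1 = assms(6) and d0 = assms(7) and d1 = assms(8) and mu0 = assms(9) and mbig = assms(10)
  let ?S = "x ` {..<n}"
  let ?M = "gaussian_matrix m :: (('p \<times> nat) \<Rightarrow> real) measure"
  let ?g = "std_gaussian :: (real^'p) measure"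
  interpret M: prob_space ?M by (rule prob_M)
  interpret g: prob_space ?g by (rule prob_gauss)
  have finS: "finite ?S" by simp
  have HS: "H \<subseteq> ?S" unfolding H_def P_def using extreme_point_of_convex_hull by blast
  have finH: "finite H" using finite_subset[OF HS finS] .
  have Sne: "?S \<noteq> {}" using n1 by (simp add: lessThan_empty_iff)
  have Pne: "P \<noteq> {}" unfolding P_def using Sne by simp
  obtain h0 where h0: "h0 extreme_point_of P"
    using extreme_point_exists_convex[of P] Pne finS unfolding P_def
    by (metis convex_convex_hull finite_imp_compact_convex_hull)
  have Hne: "H \<noteq> {}" using h0 by (auto simp: H_def)
  have kpos: "k > 0" unfolding k_def using finH Hne by (simp add: card_gt_0_iff)
  define om where "om h = measure ?g (normal_cone P h)" for h
  have sa: "solid_angle (normal_cone P h) = om h" for h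
    by (simp add: solid_angle_def om_def)
  have NCs: "normal_cone P h \<in> sets borel" for h
    by (rule borel_closed) (rule normal_cone_closed)
  have om_pos: "om h > 0" if "h \<in> H" for h
  proof -
    from that have "h extreme_point_of convex hull ?S" by (simp add: H_def P_def)
    from geo_exposed[OF finS this] obtain c r where cr: "r > 0" "ball c r \<subseteq> normal_cone P h"
      unfolding P_def by blast
    have "emeasure ?g (ball c r) > 0" by (rule gauss_ball_pos[OF cr(1)])
    then have "measure ?g (ball c r) > 0"
      by (simp add: g.emeasure_eq_measure)
    also have "measure ?g (ball c r) \<le> measure ?g (normal_cone P h)"
      by (rule g.finite_measure_mono[OF cr(2)]) (simp add: sets_gauss NCs)
    finally show ?thesis by (simp add: om_def)
  qed
  have mu_eq: "\<mu> = Max ((\<lambda>h. 1 - 2 * om h) ` H)" by (simp add: \<mu>_def sa)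
  have mu_ge: "1 - 2 * om h \<le> \<mu>" if "h \<in> H" for h
    unfolding mu_eq using finH that by (intro Max_ge) auto
  have mu_lt1: "\<mu> < 1"
  proof -
    have "\<mu> \<in> (\<lambda>h. 1 - 2 * om h) ` H" unfolding mu_eq using finH Hne by (intro Max_in) auto
    then obtain h where "h \<in> H" "\<mu> = 1 - 2 * om h" by blast
    with om_pos[of h] show ?thesis by simp
  qed
  have notsing: "\<exists>y\<in>?S. y \<noteq> h" if hH: "h \<in> H" for h
  proof (rule ccontr)
    assume "\<not> ?thesis"
    then have Sh: "?S = {h}" using Sne HS hH by blast
    then have Ph: "P = {h}" by (simp add: P_def)
    have HH: "H = {h}" using HS hH Sh by blast
    have "normal_cone P h = UNIV" by (simp add: Ph normal_cone_def)
    then have "om h = 1" using g.prob_space by (simp add: om_def)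
    then have "\<mu> = -1" by (simp add: mu_eq HH)
    with mu0 show False by simp
  qed
  have null: "measure ?g (normal_cone P h \<inter> uminus -` normal_cone P h) = 0" if hH: "h \<in> H" for h
  proof -
    obtain y where y: "y \<in> ?S" "y \<noteq> h" using notsing[OF hH] by blast
    have yP: "y \<in> P" unfolding P_def by (rule hull_inc) (rule y(1))
    have sub: "normal_cone P h \<inter> uminus -` normal_cone P h \<subseteq> {w. w \<bullet> (y - h) = 0}"
    proof
      fix w assume w: "w \<in> normal_cone P h \<inter> uminus -` normal_cone P h"
      then have "inner w (y - h) \<le> 0" "inner (- w) (y - h) \<le> 0"
        using yP unfolding normal_cone_def by blast+
      then show "w \<in> {w. w \<bullet> (y - h) = 0}" by simp
    qed
    have "emeasure ?g {w. w \<bullet> (y - h) = 0} = 0" by (rule gauss_hyper) (use y in simp)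
    then have "measure ?g {w. w \<bullet> (y - h) = 0} = 0" by (simp add: g.emeasure_eq_measure)
    moreover have "measure ?g (normal_cone P h \<inter> uminus -` normal_cone P h) \<le> measure ?g {w. w \<bullet> (y - h) = 0}"
      by (rule g.finite_measure_mono[OF sub]) (simp add: sets_gauss)
    ultimately show ?thesis using measure_nonneg[of ?g] by (metis antisym)
  qed
  define U where "U h = UNIV - (normal_cone P h \<union> uminus -` normal_cone P h)" for h
  have negs: "uminus -` normal_cone P h \<in> sets borel" for h
    by (rule measurable_sets_borel[OF _ NCs]) simp
  have Us: "U h \<in> sets borel" for h
    unfolding U_def using NCs negs by auto
  have mU: "measure ?g (U h) \<le> \<mu>" if hH: "h \<in> H" for h
  proof -
    have fm: "A \<in> fmeasurable ?g" if "A \<in> sets borel" for A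
      using that by (simp add: g.fmeasurable_eq_sets sets_gauss)
    have "measure ?g (normal_cone P h \<union> uminus -` normal_cone P h)
        = measure ?g (normal_cone P h) + measure ?g (uminus -` normal_cone P h) - measure ?g (normal_cone P h \<inter> uminus -` normal_cone P h)"
      by (rule measure_Un3[OF fm[OF NCs] fm[OF negs]])
    also have "\<dots> = 2 * om h" using null[OF hH] gauss_neg_pre[OF NCs] by (simp add: om_def)
    finally have un: "measure ?g (normal_cone P h \<union> uminus -` normal_cone P h) = 2 * om h" .
    have "measure ?g (U h) = measure ?g (space ?g - (normal_cone P h \<union> uminus -` normal_cone P h))"
      by (simp add: U_def)
    also have "\<dots> = 1 - 2 * om h"
      using NCs negs by (subst g.prob_compl) (auto simp: sets_gauss un)
    finally show ?thesis using mu_ge[OF hH] by simp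
  qed
  have L: "ln (1 / \<mu>) > 0" using mu0 mu_lt1 by simp
  have lnk: "ln (real k / \<delta>) > 0" using kpos d0 d1 by (simp add: less_divide_eq)
  have kap: "\<kappa> * real k * ln (real k / \<delta>) = ln (real k / \<delta>) / ln (1 / \<mu>)"
    using kpos by (simp add: \<kappa>_def field_simps)
  have "0 < \<kappa> * real k * ln (real k / \<delta>)" unfolding kap using L lnk by simp
  with mbig have mpos: "m > 0" by linarith
  define E where "E h = {G \<in> space ?M. \<forall>j\<in>{..<m}. gcol G j \<in> U h}" for h
  have Es: "E h \<in> sets ?M" for h
  proof -
    have "{G \<in> space ?M. gcol G j \<in> U h} \<in> sets ?M" if "j \<in> {..<m}" for j
    proof -
      have "{G \<in> space ?M. gcol G j \<in> U h} = (\<lambda>G. gcol G j) -` U h \<inter> space ?M" by blast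
      also have "\<dots> \<in> sets ?M" using gcol_meas[of j m] that Us[of h] by (intro measurable_sets) auto
      finally show ?thesis .
    qed
    then show ?thesis unfolding E_def by (intro sets.sets_Collect_finite_All) auto
  qed
  have pE: "measure ?M (E h) \<le> \<mu> ^ m" if hH: "h \<in> H" for h
  proof -
    have "measure ?M (E h) = measure ?g (U h) ^ m"
    proof -
      have "E h = {G \<in> space ?M. \<forall>j<m. gcol G j \<in> U h}" unfolding E_def by auto
      then show ?thesis using all_cols_prob[OF mpos Us[of h]] by simp
    qed
    also have "\<dots> \<le> \<mu> ^ m" by (rule power_mono[OF mU[OF hH] measure_nonneg])
    finally show ?thesis .
  qed
  define good where "good = {G \<in> space ?M. H \<subseteq> returned_rows n m x G}"
  have good_eq: "good = {G \<in> space ?M. \<forall>h\<in>H. \<exists>r\<in>{..<n}. x r = h \<and>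
        ((\<exists>j\<in>{..<m}. \<forall>s\<in>{..<n}. XG_entry x G s j \<le> XG_entry x G r j) \<or>
         (\<exists>j\<in>{..<m}. \<forall>s\<in>{..<n}. XG_entry x G r j \<le> XG_entry x G s j))}"
    unfolding good_def returned_rows_def I_max_def I_min_def lessThan_iff
    apply (intro Collect_cong conj_cong refl)
    apply (rule iffI)
     apply (intro ballI)
     apply (drule (1) subsetD)
     apply (erule imageE)
     apply blast
    apply (rule subsetI)
    apply (drule (1) bspec)
    apply (elim bexE conjE)
    apply (rule image_eqI)
     apply (erule sym)
    apply blast
    done
  have em: "(\<lambda>G. XG_entry x G s j) \<in> borel_measurable ?M" if "j < m" for s j
  proof -
    have "(\<lambda>G. XG_entry x G s j) = (\<lambda>G. inner (x s) (gcol G j))" by (simp add: XG_entry_def fun_eq_iff)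
    moreover have "(\<lambda>G. inner (x s) (gcol G j)) \<in> borel_measurable ?M"
      using gcol_meas[OF that] by (intro borel_measurable_inner measurable_const) simp_all
    ultimately show ?thesis by simp
  qed
  have good_s: "good \<in> sets ?M"
    unfolding good_eq
    apply (intro sets.sets_Collect_finite_All sets.sets_Collect_finite_Ex sets.sets_Collect_conj sets.sets_Collect_disj sets.sets_Collect_const finH finite_lessThan)
    apply (rule borel_measurable_le; rule em; simp)
    apply (rule borel_measurable_le; rule em; simp)
    done
  have sub: "space ?M - good \<subseteq> (\<Union>h\<in>H. E h)"
  proof
    fix G assume G: "G \<in> space ?M - good"
    then obtain h where hH: "h \<in> H" and hn: "h \<notin> returned_rows n m x G"
      unfolding good_def by blast
    obtain r where r: "r < n" "h = x r" using HS hH by blast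
    have "gcol G j \<in> U h" if j: "j < m" for j
    proof -
      have "gcol G j \<notin> normal_cone P h"
        using returned_max[OF r(1) j, of G x] hn r(2) by (auto simp: P_def)
      moreover have "gcol G j \<notin> uminus -` normal_cone P h"
        using returned_min[OF r(1) j, of G x] hn r(2) by (auto simp: P_def)
      ultimately show ?thesis by (simp add: U_def)
    qed
    then have "G \<in> E h" using G by (simp add: E_def)
    then show "G \<in> (\<Union>h\<in>H. E h)" using hH by blast
  qed
  have "measure ?M (space ?M - good) \<le> measure ?M (\<Union>h\<in>H. E h)"
    by (rule M.finite_measure_mono[OF sub]) (use Es finH in auto)
  also have "\<dots> \<le> (\<Sum>h\<in>H. measure ?M (E h))"
    by (rule M.finite_measure_subadditive_finite[OF finH]) (use Es in auto)
  also have "\<dots> \<le> (\<Sum>h\<in>H. \<mu> ^ m)" by (rule sum_mono) (rule pE)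
  also have "\<dots> = real k * \<mu> ^ m" by (simp add: k_def)
  also have "\<dots> \<le> \<delta>"
  proof -
    have "ln (real k / \<delta>) < real m * ln (1 / \<mu>)"
      using mbig unfolding kap using L by (simp add: divide_less_eq)
    then have "ln (real k) - ln \<delta> < - (real m * ln \<mu>)"
      using kpos d0 mu0 by (simp add: ln_div)
    then have "real m * ln \<mu> < ln \<delta> - ln (real k)" by simp
    then have "exp (real m * ln \<mu>) < exp (ln \<delta> - ln (real k))" by simp
    then have "\<mu> ^ m < \<delta> / real k"
      using kpos d0 mu0 by (simp add: exp_diff exp_of_nat_mult)
    then show ?thesis using kpos by (simp add: field_simps)
  qed
  finally have "measure ?M (space ?M - good) \<le> \<delta>" .
  moreover have "measure ?M (space ?M - good) = 1 - measure ?M good"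
    by (rule M.prob_compl[OF good_s])
  ultimately show ?thesis unfolding good_def by simp
qed

end
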